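(* Let $X\ge0$ be a random variable. If $$\liminf_{x\to\infty}\frac{R_X(x)}{\sqrt{x}}\in(0,\infty],$$ then $X$ is determined by its moments (in the Stieltjes sense). Moreover, if $X$ is heavy-tailed and some natural scale $h_X$ of $X$ satisfies $\liminf_{x\to\infty} h_X(x)/\sqrt{x}\in(0,\infty]$, then $\liminf_{x\to\infty}R_X(x)/\sqrt x\in(0,\infty]$, and hence $X$ is determined by its moments.
   Context: $R_X(x):=-\log P(X>x)$. $X$ is heavy-tailed if $E(e^{sX})=\infty$ for all $s>0$. A natural scale of a heavy-tailed $X$ is a concave $h:[0,\infty)\to[0,\infty)$ with $h(0)=0$, $h(x)\to\infty$, and $\liminf_{x\to\infty}R_X(x)/h(x)=1$. A non-negative $X$ with all moments finite is determined by its moments if every non-negative random variable $Y$ with $E(Y^k)=E(X^k)$ for all $k\in\mathbb{N}$ has the same law as $X$. *)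

theory Defs
  imports "HOL-Probability.Probability"
begin

definition tail_R :: "'a measure \<Rightarrow> ('a \<Rightarrow> real) \<Rightarrow> real \<Rightarrow> ereal" where
  "tail_R M X x =
     (let p = measure M {\<omega> \<in> space M. X \<omega> > x}
      in if p = 0 then \<infinity> else ereal (- ln p))"

definition heavy_tailed :: "'a measure \<Rightarrow> ('a \<Rightarrow> real) \<Rightarrow> bool" where
  "heavy_tailed M X \<longleftrightarrow>
     (\<forall>s::real. s > 0 \<longrightarrow> (\<integral>\<^sup>+ \<omega>. ennreal (exp (s * X \<omega>)) \<partial>M) = \<infinity>)"

definition natural_scale :: "'a measure \<Rightarrow> ('a \<Rightarrow> real) \<Rightarrow> (real \<Rightarrow> real) \<Rightarrow> bool" where
  "natural_scale M X h \<longleftrightarrow>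
     concave_on {0..} h \<and> (\<forall>x\<ge>0. h x \<ge> 0) \<and> h 0 = 0 \<and>
     filterlim h at_top at_top \<and>
     Liminf at_top (\<lambda>x. tail_R M X x / ereal (h x)) = 1"

text \<open>Laws are measures on the real
  line, so it suffices to let Y range over random variables on probability spaces whose
  sample space is the real line (any law is realised there by the identity).\<close>
definition moment_determinate :: "'a measure \<Rightarrow> ('a \<Rightarrow> real) \<Rightarrow> bool" where
  "moment_determinate M X \<longleftrightarrow>
     (\<forall>k::nat. integrable M (\<lambda>\<omega>. X \<omega> ^ k)) \<and>
     (\<forall>(N :: real measure) (Y :: real \<Rightarrow> real).
        prob_space N \<longrightarrow> Y \<in> borel_measurable N \<longrightarrow> (AE \<omega> in N. Y \<omega> \<ge> 0) \<longrightarrow>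
        (\<forall>k::nat. integrable N (\<lambda>\<omega>. Y \<omega> ^ k) \<and>
                  (\<integral>\<omega>. Y \<omega> ^ k \<partial>N) = (\<integral>\<omega>. X \<omega> ^ k \<partial>M)) \<longrightarrow>
        distr N borel Y = distr M borel X)"

end

theory Submission
  imports Defs
begin


definition symm :: "'a measure \<Rightarrow> ('a \<Rightarrow> real) \<Rightarrow> real measure" where
 "symm M X = distr (M \<Otimes>\<^sub>M measure_pmf (bernoulli_pmf (1/2))) borel
     (\<lambda>(\<omega>,b). if b then sqrt (X \<omega>) else - sqrt (X \<omega>))"
lemma symm_props:
  assumes M: "prob_space M" and X[measurable]: "X \<in> borel_measurable M"
    and nn: "\<forall>\<omega>\<in>space M. X \<omega> \<ge> 0"
  shows "real_distribution (symm M X)"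
    "char (symm M X) v = (\<integral>\<omega>. (iexp (v * sqrt (X \<omega>)) + iexp (-(v * sqrt (X \<omega>)))) / 2 \<partial>M)"
    "distr M borel X = distr (symm M X) borel (\<lambda>z. z^2)"
proof -
  let ?B = "measure_pmf (bernoulli_pmf (1/2))"
  let ?P = "M \<Otimes>\<^sub>M ?B"
  let ?f = "(\<lambda>(\<omega>,b). if b then sqrt (X \<omega>) else - sqrt (X \<omega>))"
  interpret P: prob_space ?P
    by (intro prob_space_pair M prob_space_measure_pmf)
  interpret pair_sigma_finite M ?B
    by (intro pair_sigma_finite.intro prob_space_imp_sigma_finite M prob_space_measure_pmf)
  have fm[measurable]: "?f \<in> borel_measurable ?P" by measurable
  show "real_distribution (symm M X)" unfolding symm_def by (rule P.real_distribution_distr) simp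
  have "char (symm M X) v = (\<integral>p. iexp (v * ?f p) \<partial>?P)"
    unfolding symm_def char_def by (subst integral_distr) auto
  also have "\<dots> = (\<integral>\<omega>. (\<integral>b. iexp (v * ?f (\<omega>,b)) \<partial>?B) \<partial>M)"
    by (rule integral_fst'[symmetric]) (intro P.integrable_const_bound[where B=1], auto)
  also have "\<dots> = (\<integral>\<omega>. (iexp (v * sqrt (X \<omega>)) + iexp (-(v * sqrt (X \<omega>)))) / 2 \<partial>M)"
    apply (intro Bochner_Integration.integral_cong refl)
    apply (subst integral_measure_pmf[of UNIV])
    by (auto simp: UNIV_bool field_simps scaleR_conv_of_real)
  finally show "char (symm M X) v = (\<integral>\<omega>. (iexp (v * sqrt (X \<omega>)) + iexp (-(v * sqrt (X \<omega>)))) / 2 \<partial>M)" .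
  have "distr M borel X = distr (distr ?P M fst) borel X"
  proof -
    have "distr ?P M fst = M" by (rule prob_space.distr_pair_fst[OF prob_space_measure_pmf])
    then show ?thesis by simp
  qed
  also have "\<dots> = distr ?P borel (\<lambda>p. X (fst p))"
    by (subst distr_distr) (auto simp: comp_def)
  also have "\<dots> = distr ?P borel (\<lambda>p. (?f p)^2)"
    by (intro distr_cong) (auto simp: space_pair_measure nn)
  also have "\<dots> = distr (symm M X) borel (\<lambda>z. z^2)"
    unfolding symm_def by (subst distr_distr) (auto simp: comp_def)
  finally show "distr M borel X = distr (symm M X) borel (\<lambda>z. z^2)" .
qed



lemma pow_le_exp: assumes "(x::real) \<ge> 0" shows "x ^ n / fact n \<le> exp x"
proof -
  have s: "(\<lambda>n. x^n /\<^sub>R fact n) sums exp x" by (rule exp_converges)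
  have "(\<Sum>i\<in>{n}. x^i /\<^sub>R fact i) \<le> exp x"
    by (rule sum_le_suminf[OF sums_summable[OF s], of "{n}", unfolded sums_unique[OF s, symmetric]])
      (use assms in auto)
  then show ?thesis by (simp add: divide_inverse mult.commute)
qed

lemma pow_le_exp2: assumes "(z::real) \<ge> 0" "t > 0" shows "z ^ m \<le> fact m / t ^ m * exp (t * z)"
proof -
  have "(t*z)^m / fact m \<le> exp (t*z)" using assms by (intro pow_le_exp) auto
  then have "t^m * z^m \<le> fact m * exp (t*z)" by (simp add: power_mult_distrib divide_le_eq mult.commute)
  then show ?thesis using assms by (simp add: divide_simps mult.commute)
qed

lemma fact_add_le: "fact (k + m) \<le> (fact k * fact m * 2 ^ (k + m) :: real)"
proof -
  have "fact k * fact m * ((k+m) choose k) = (fact (k+m) :: nat)"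
    using binomial_fact_lemma[of k "k+m"] by simp
  then have e: "fact k * fact m * real ((k+m) choose k) = fact (k+m)"
    by (metis of_nat_fact of_nat_mult)
  have "real ((k+m) choose k) \<le> 2^(k+m)"
    using binomial_le_pow2[of "k+m" k] by (simp add: of_nat_le_iff flip: of_nat_power)
  then show ?thesis unfolding e[symmetric]
    by (intro mult_left_mono) auto
qed

lemma coef_bound:
  assumes "(t::real) > 0" "\<bar>u\<bar> \<le> t/4"
  shows "\<bar>u\<bar>^m / fact m * (fact (k+m) / t^(k+m)) \<le> fact k * (2/t)^k * (1/2)^m"
proof -
  have a: "\<bar>u\<bar>^m \<le> (t/4)^m" using assms by (intro power_mono) auto
  have "\<bar>u\<bar>^m / fact m * (fact (k+m) / t^(k+m)) \<le> (t/4)^m / fact m * (fact k * fact m * 2 ^ (k + m) / t^(k+m))"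
    using a fact_add_le[of k m] assms
    by (intro mult_mono divide_right_mono) (auto intro!: divide_nonneg_nonneg)
  also have "\<dots> = fact k * (2/t)^k * ((t/4)^m * 2^m / t^m)"
    using assms by (simp add: power_add power_divide field_simps)
  also have "(t/4)^m * 2^m / t^m = (1/2::real)^m"
  proof -
    have "(t/4)^m * 2^m / t^m = ((t/4) * 2 / t)^m" by (simp only: power_mult_distrib power_divide)
    also have "(t/4) * 2 / t = 1/2" using assms by simp
    finally show ?thesis .
  qed
  finally show ?thesis .
qed

definition P :: "nat \<Rightarrow> real \<Rightarrow> real \<Rightarrow> complex" where
 "P k v z = complex_of_real z ^ k * iexp (v * z)"

definition H :: "nat \<Rightarrow> real \<Rightarrow> real \<Rightarrow> complex" where
 "H k v z = (P k v z + P k v (-z)) / 2"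

lemma norm_iexp[simp]: "norm (iexp x) = 1"
  by (simp add: norm_exp_i_times)

lemma P_taylor:
  "norm (P k (v+u) z - (\<Sum>j\<le>n. (\<i>*u)^j/fact j * P (k+j) v z))
     \<le> \<bar>u\<bar>^(Suc n) * \<bar>z\<bar>^(k+Suc n) / fact (Suc n)"
proof -
  define A where "A = complex_of_real z ^ k * iexp (v * z)"
  have trm: "(\<i>*u)^j/fact j * P (k+j) v z = A * ((\<i>*complex_of_real (u * z))^j/fact j)" for j
    unfolding P_def A_def by (simp add: power_add power_mult_distrib mult_ac)
  have e1: "(\<Sum>j\<le>n. (\<i>*u)^j/fact j * P (k+j) v z) = A * (\<Sum>j\<le>n. (\<i>*complex_of_real (u * z))^j/fact j)"
    unfolding trm by (simp add: sum_distrib_left)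
  have e2: "P k (v+u) z = A * iexp (u * z)"
    unfolding P_def A_def by (simp add: exp_add[symmetric] algebra_simps)
  have "norm (P k (v+u) z - (\<Sum>j\<le>n. (\<i>*u)^j/fact j * P (k+j) v z))
     = norm A * norm (iexp (u * z) - (\<Sum>j\<le>n. (\<i>*complex_of_real (u * z))^j/fact j))"
    unfolding e1 e2 by (simp add: right_diff_distrib[symmetric] norm_mult)
  also have "\<dots> \<le> \<bar>z\<bar>^k * (\<bar>u * z\<bar>^(Suc n)/fact (Suc n))"
    apply (intro mult_mono)
       apply (simp add: A_def norm_mult norm_power)
      apply (rule iexp_approx1)
    by auto
  also have "\<dots> = \<bar>u\<bar>^(Suc n) * \<bar>z\<bar>^(k+Suc n) / fact (Suc n)"
    by (simp add: abs_mult power_mult_distrib power_add)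
  finally show ?thesis .
qed

lemma H_taylor:
  "norm (H k (v+u) z - (\<Sum>j\<le>n. (\<i>*u)^j/fact j * H (k+j) v z))
     \<le> \<bar>u\<bar>^(Suc n) * \<bar>z\<bar>^(k+Suc n) / fact (Suc n)"
proof -
  have "H k (v+u) z - (\<Sum>j\<le>n. (\<i>*u)^j/fact j * H (k+j) v z)
    = ((P k (v+u) z - (\<Sum>j\<le>n. (\<i>*u)^j/fact j * P (k+j) v z))
      + (P k (v+u) (-z) - (\<Sum>j\<le>n. (\<i>*u)^j/fact j * P (k+j) v (-z)))) / 2"
    unfolding H_def
    by (simp add: sum_divide_distrib sum.distrib algebra_simps add_divide_distrib diff_divide_distrib)
  also have "norm \<dots> \<le> (\<bar>u\<bar>^(Suc n) * \<bar>z\<bar>^(k+Suc n) / fact (Suc n) + \<bar>u\<bar>^(Suc n) * \<bar>-z\<bar>^(k+Suc n) / fact (Suc n)) / 2"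
    unfolding norm_divide norm_numeral
    by (intro divide_right_mono order.trans[OF norm_triangle_ineq] add_mono P_taylor) auto
  also have "\<dots> = \<bar>u\<bar>^(Suc n) * \<bar>z\<bar>^(k+Suc n) / fact (Suc n)" unfolding abs_minus_cancel by (rule field_sum_of_halves[unfolded add_divide_distrib[symmetric]])
  finally show ?thesis .
qed

lemma norm_P_le: "norm (P k v z) \<le> \<bar>z\<bar>^k"
  by (simp add: P_def norm_mult norm_power)

lemma norm_H_le: "norm (H k v z) \<le> \<bar>z\<bar>^k"
proof -
  have "norm (H k v z) \<le> (norm (P k v z) + norm (P k v (-z))) / 2"
    unfolding H_def norm_divide norm_numeral by (intro divide_right_mono norm_triangle_ineq) auto
  also have "\<dots> \<le> (\<bar>z\<bar>^k + \<bar>-z\<bar>^k)/2"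
    by (intro divide_right_mono add_mono norm_P_le) auto
  finally show ?thesis by simp
qed

lemma H_zero: assumes "x \<ge> 0"
  shows "H k 0 (sqrt x) = (if even k then complex_of_real (x ^ (k div 2)) else 0)"
proof -
  have "H k 0 (sqrt x) = complex_of_real ((sqrt x ^ k + (- sqrt x) ^ k) / 2)"
    unfolding H_def P_def by simp
  also have "\<dots> = (if even k then complex_of_real (x ^ (k div 2)) else 0)"
  proof (cases "even k")
    case True
    then obtain j where k: "k = 2 * j" by blast
    have "sqrt x ^ k = x ^ j" unfolding k power_mult using assms by simp
    then show ?thesis using True k by (simp add: power_minus_even)
  next
    case False
    then show ?thesis by (simp add: power_minus_odd)
  qed
  finally show ?thesis .
qed

locale expmom = prob_space M for M :: "'a measure" +
  fixes X :: "'a \<Rightarrow> real" and t :: real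
  assumes Xm[measurable]: "X \<in> borel_measurable M" and Xnn: "\<And>\<omega>. \<omega> \<in> space M \<Longrightarrow> X \<omega> \<ge> 0"
    and tpos: "t > 0" and Eint: "integrable M (\<lambda>\<omega>. exp (t * sqrt (X \<omega>)))"
begin

definition "EE = (\<integral>\<omega>. exp (t * sqrt (X \<omega>)) \<partial>M)"

lemma EE_nonneg: "EE \<ge> 0" unfolding EE_def by (intro integral_nonneg_AE) auto

lemma int_pow: "integrable M (\<lambda>\<omega>. sqrt (X \<omega>) ^ m)"
proof (rule Bochner_Integration.integrable_bound[OF Bochner_Integration.integrable_mult_right[OF Eint, of "fact m / t^m"]])
  show "AE x in M. norm (sqrt (X x) ^ m) \<le> norm (fact m / t ^ m * exp (t * sqrt (X x)))"
  proof (intro AE_I2)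
    fix x assume x: "x \<in> space M"
    have "sqrt (X x) ^ m \<le> fact m / t ^ m * exp (t * sqrt (X x))"
      by (rule pow_le_exp2) (use Xnn[OF x] tpos in auto)
    then show "norm (sqrt (X x) ^ m) \<le> norm (fact m / t ^ m * exp (t * sqrt (X x)))"
      using Xnn[OF x] tpos by simp
  qed
qed measurable

lemma int_X_pow: "integrable M (\<lambda>\<omega>. X \<omega> ^ m)"
proof -
  have "integrable M (\<lambda>\<omega>. sqrt (X \<omega>) ^ (2*m))" by (rule int_pow)
  then show ?thesis
    by (rule Bochner_Integration.integrable_cong[THEN iffD1, rotated -1]) (auto simp: power_mult Xnn)
qed

lemma H_meas[measurable]: "(\<lambda>\<omega>. H k v (sqrt (X \<omega>))) \<in> borel_measurable M"
  unfolding H_def P_def by measurable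

lemma int_H: "integrable M (\<lambda>\<omega>. H k v (sqrt (X \<omega>)))"
proof (rule Bochner_Integration.integrable_bound[OF int_pow[of k]])
  show "AE x in M. norm (H k v (sqrt (X x))) \<le> norm (sqrt (X x) ^ k)"
    using Xnn by (intro AE_I2) (auto intro: order.trans[OF norm_H_le] simp: norm_power)
qed measurable

lemma int_H0: "(\<integral>\<omega>. H k 0 (sqrt (X \<omega>)) \<partial>M) = (if even k then complex_of_real (\<integral>\<omega>. X \<omega> ^ (k div 2) \<partial>M) else 0)"
  by (subst Bochner_Integration.integral_cong[OF refl H_zero[OF Xnn]]) (auto simp del: of_real_power)

lemma rem_bound:
  assumes u: "\<bar>u\<bar> \<le> t/4"
  shows "norm ((\<integral>\<omega>. H k (v+u) (sqrt (X \<omega>)) \<partial>M)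
           - (\<Sum>j\<le>n. (\<i>*u)^j/fact j * (\<integral>\<omega>. H (k+j) v (sqrt (X \<omega>)) \<partial>M)))
         \<le> fact k * (2/t)^k * (1/2)^(Suc n) * EE"
proof -
  define C where "C = \<bar>u\<bar>^(Suc n) / fact (Suc n) * (fact (k + Suc n) / t^(k + Suc n))"
  define c where "c j = (\<i>*complex_of_real u)^j/fact j" for j
  have sm: "(\<integral>\<omega>. (\<Sum>j\<le>n. c j * H (k+j) v (sqrt (X \<omega>))) \<partial>M) = (\<Sum>j\<le>n. c j * (\<integral>\<omega>. H (k+j) v (sqrt (X \<omega>)) \<partial>M))"
    by (subst Bochner_Integration.integral_sum) (auto intro!: int_H Bochner_Integration.integrable_mult_right)
  have "(\<integral>\<omega>. H k (v+u) (sqrt (X \<omega>)) \<partial>M)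
           - (\<Sum>j\<le>n. (\<i>*u)^j/fact j * (\<integral>\<omega>. H (k+j) v (sqrt (X \<omega>)) \<partial>M))
       = (\<integral>\<omega>. H k (v+u) (sqrt (X \<omega>)) - (\<Sum>j\<le>n. (\<i>*u)^j/fact j * H (k+j) v (sqrt (X \<omega>))) \<partial>M)"
    unfolding c_def[symmetric] sm[symmetric]
    by (subst Bochner_Integration.integral_diff) (auto intro!: int_H Bochner_Integration.integrable_sum Bochner_Integration.integrable_mult_right)
  also have "norm \<dots> \<le> (\<integral>\<omega>. C * exp (t * sqrt (X \<omega>)) \<partial>M)"
  proof (rule order.trans[OF Bochner_Integration.integral_norm_bound Bochner_Integration.integral_mono])
    show "integrable M (\<lambda>\<omega>. norm (H k (v+u) (sqrt (X \<omega>)) - (\<Sum>j\<le>n. (\<i>*u)^j/fact j * H (k+j) v (sqrt (X \<omega>)))))"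
      by (intro integrable_norm Bochner_Integration.integrable_diff Bochner_Integration.integrable_sum Bochner_Integration.integrable_mult_right int_H)
    show "integrable M (\<lambda>\<omega>. C * exp (t * sqrt (X \<omega>)))" by (intro Bochner_Integration.integrable_mult_right Eint)
    fix \<omega> assume w: "\<omega> \<in> space M"
    have "norm (H k (v+u) (sqrt (X \<omega>)) - (\<Sum>j\<le>n. (\<i>*u)^j/fact j * H (k+j) v (sqrt (X \<omega>))))
       \<le> \<bar>u\<bar>^(Suc n) * \<bar>sqrt (X \<omega>)\<bar>^(k+Suc n) / fact (Suc n)" by (rule H_taylor)
    also have "\<dots> \<le> \<bar>u\<bar>^(Suc n) * (fact (k + Suc n) / t^(k + Suc n) * exp (t * sqrt (X \<omega>))) / fact (Suc n)"
      using Xnn[OF w] tpos pow_le_exp2[of "sqrt (X \<omega>)" t "k + Suc n"]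
      by (intro divide_right_mono mult_left_mono) auto
    also have "\<dots> = C * exp (t * sqrt (X \<omega>))" unfolding C_def by (simp add: field_simps)
    finally show "norm (H k (v+u) (sqrt (X \<omega>)) - (\<Sum>j\<le>n. (\<i>*u)^j/fact j * H (k+j) v (sqrt (X \<omega>))))
       \<le> C * exp (t * sqrt (X \<omega>))" .
  qed
  also have "\<dots> = C * EE" unfolding EE_def by simp
  also have "\<dots> \<le> fact k * (2/t)^k * (1/2)^(Suc n) * EE"
    unfolding C_def by (intro mult_right_mono coef_bound tpos u EE_nonneg)
  finally show ?thesis .
qed

end


lemma le_zero_by_geom:
  fixes a K :: real
  assumes "\<And>n. a \<le> K * (1/2)^Suc n"
  shows "a \<le> 0"
proof -
  have "(\<lambda>n. (1/2::real)^Suc n) \<longlonglongrightarrow> 0"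
    by (rule LIMSEQ_Suc[OF LIMSEQ_power_zero]) simp
  then have "(\<lambda>n. K * (1/2)^Suc n) \<longlonglongrightarrow> 0"
    by (rule tendsto_mult_right_zero)
  then show ?thesis by (rule LIMSEQ_le_const) (use assms in blast)
qed

lemma det_core:
  assumes XX: "expmom M X t" and YY: "expmom N Y t"
    and mom: "\<And>k. (\<integral>\<omega>. Y \<omega> ^ k \<partial>N) = (\<integral>\<omega>. X \<omega> ^ k \<partial>M)"
  shows "distr N borel Y = distr M borel X"
proof -
  interpret X: expmom M X t by (rule XX)
  interpret Y: expmom N Y t by (rule YY)
  define G where "G k v = (\<integral>\<omega>. H k v (sqrt (X \<omega>)) \<partial>M) - (\<integral>\<omega>. H k v (sqrt (Y \<omega>)) \<partial>N)" for k v
  have G0: "G k 0 = 0" for k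
    unfolding G_def X.int_H0 Y.int_H0 mom by simp
  have step: "G k (v+u) = 0" if h: "\<And>k. G k v = 0" and u: "\<bar>u\<bar> \<le> t/4" for k v u
  proof -
    define c where "c j = (\<i>*complex_of_real u)^j/fact j" for j
    define K where "K = fact k * (2/t)^k * (X.EE + Y.EE)"
    have "norm (G k (v+u)) \<le> K * (1/2)^Suc n" for n
    proof -
      let ?AX = "(\<integral>\<omega>. H k (v+u) (sqrt (X \<omega>)) \<partial>M)"
      let ?AY = "(\<integral>\<omega>. H k (v+u) (sqrt (Y \<omega>)) \<partial>N)"
      let ?SX = "(\<Sum>j\<le>n. c j * (\<integral>\<omega>. H (k+j) v (sqrt (X \<omega>)) \<partial>M))"
      let ?SY = "(\<Sum>j\<le>n. c j * (\<integral>\<omega>. H (k+j) v (sqrt (Y \<omega>)) \<partial>N))"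
      have "?SX - ?SY = (\<Sum>j\<le>n. c j * G (k+j) v)"
        unfolding G_def by (simp add: sum_subtractf right_diff_distrib)
      also have "\<dots> = 0" using h by simp
      finally have "G k (v+u) = (?AX - ?SX) - (?AY - ?SY)" unfolding G_def by (simp add: algebra_simps)
      then have "norm (G k (v+u)) \<le> norm (?AX - ?SX) + norm (?AY - ?SY)"
        by (simp add: norm_triangle_ineq4)
      also have "\<dots> \<le> fact k * (2/t)^k * (1/2)^(Suc n) * X.EE + fact k * (2/t)^k * (1/2)^(Suc n) * Y.EE"
        unfolding c_def by (intro add_mono X.rem_bound Y.rem_bound u)
      also have "\<dots> = K * (1/2)^Suc n" unfolding K_def by (simp add: algebra_simps)
      finally show ?thesis .
    qed
    then have "norm (G k (v+u)) \<le> 0" by (intro le_zero_by_geom) 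
    then show ?thesis by simp
  qed
  have ind: "G k (real m * (t/4)) = 0 \<and> G k (-(real m * (t/4))) = 0" for m k
  proof (induction m arbitrary: k)
    case 0 then show ?case using G0 by simp
  next
    case (Suc m)
    have a: "real (Suc m) * (t/4) = real m * (t/4) + t/4" by (simp add: algebra_simps)
    have b: "-(real (Suc m) * (t/4)) = -(real m * (t/4)) + (-(t/4))" by (simp add: algebra_simps)
    have "G k (real m * (t/4) + t/4) = 0"
      by (rule step) (use Suc X.tpos in auto)
    moreover have "G k (-(real m * (t/4)) + (-(t/4))) = 0"
      by (rule step) (use Suc X.tpos in auto)
    ultimately show ?case unfolding a b by simp
  qed
  have allG: "G k v = 0" for k v
  proof -
    define s where "s = t/4"
    have s: "s > 0" using X.tpos by (simp add: s_def)
    define m where "m = nat \<lfloor>\<bar>v\<bar>/s\<rfloor>"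
    have m1: "real m * s \<le> \<bar>v\<bar>" and m2: "\<bar>v\<bar> < real m * s + s"
    proof -
      have "real m = of_int \<lfloor>\<bar>v\<bar>/s\<rfloor>" using s unfolding m_def by simp
      moreover note floor_divide_lower[OF s, of "\<bar>v\<bar>"] floor_divide_upper[OF s, of "\<bar>v\<bar>"]
      ultimately show "real m * s \<le> \<bar>v\<bar>" "\<bar>v\<bar> < real m * s + s"
        by (simp_all add: algebra_simps)
    qed
    show ?thesis
    proof (cases "v \<ge> 0")
      case True
      have "v = real m * (t/4) + (v - real m * s)" by (simp add: s_def)
      moreover have "\<bar>v - real m * s\<bar> \<le> t/4" using m1 m2 True s by (simp add: s_def)
      ultimately show ?thesis using step[of "real m * (t/4)" "v - real m * s"] ind by metis
    next
      case False
      have "v = -(real m * (t/4)) + (v + real m * s)" by (simp add: s_def)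
      moreover have "\<bar>v + real m * s\<bar> \<le> t/4" using m1 m2 False s by (simp add: s_def)
      ultimately show ?thesis using step[of "-(real m * (t/4))" "v + real m * s"] ind by metis
    qed
  qed
  have sX: "real_distribution (symm M X)" "distr M borel X = distr (symm M X) borel (\<lambda>z. z^2)"
    using symm_props[OF X.prob_space_axioms X.Xm] X.Xnn by auto
  have sY: "real_distribution (symm N Y)" "distr N borel Y = distr (symm N Y) borel (\<lambda>z. z^2)"
    using symm_props[OF Y.prob_space_axioms Y.Xm] Y.Xnn by auto
  have cX: "char (symm M X) v = (\<integral>\<omega>. H 0 v (sqrt (X \<omega>)) \<partial>M)" for v
    using symm_props(2)[OF X.prob_space_axioms X.Xm, of v] X.Xnn by (simp add: H_def P_def)
  have cY: "char (symm N Y) v = (\<integral>\<omega>. H 0 v (sqrt (Y \<omega>)) \<partial>N)" for v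
    using symm_props(2)[OF Y.prob_space_axioms Y.Xm, of v] Y.Xnn by (simp add: H_def P_def)
  have "char (symm M X) = char (symm N Y)"
    using allG[of 0] by (auto simp: cX cY G_def fun_eq_iff)
  then have "symm M X = symm N Y" by (intro Levy_uniqueness sX sY)
  then show ?thesis using sX sY by simp
qed


lemma cosh_moments:
  fixes Z :: "'b \<Rightarrow> real"
  assumes Zm[measurable]: "Z \<in> borel_measurable N" and Znn: "\<And>\<omega>. \<omega> \<in> space N \<Longrightarrow> Z \<omega> \<ge> 0"
    and Zi: "\<And>k. integrable N (\<lambda>\<omega>. Z \<omega> ^ k)" and t: "t \<ge> 0"
  shows "(\<integral>\<^sup>+\<omega>. ennreal (cosh (t * sqrt (Z \<omega>))) \<partial>N)
       = (\<Sum>n. ennreal (if even n then t^n / fact n * (\<integral>\<omega>. Z \<omega> ^ (n div 2) \<partial>N) else 0))"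
proof -
  define a where "a n z = (if even n then t^n / fact n * z ^ (n div 2) else 0)" for n and z :: real
  have a_nn: "z \<ge> 0 \<Longrightarrow> a n z \<ge> 0" for n z unfolding a_def using t by auto
  have pt: "ennreal (cosh (t * sqrt z)) = (\<Sum>n. ennreal (a n z))" if z: "z \<ge> 0" for z
  proof -
    have "(\<lambda>n. a n z) = (\<lambda>n. if even n then (t * sqrt z) ^ n /\<^sub>R fact n else 0)"
    proof
      fix n show "a n z = (if even n then (t * sqrt z) ^ n /\<^sub>R fact n else 0)"
      proof (cases "even n")
        case True
        then obtain j where n: "n = 2*j" by blast
        have "sqrt z ^ n = z ^ j" unfolding n power_mult using z by simp
        then show ?thesis using True n unfolding a_def by (simp add: power_mult_distrib divide_inverse mult_ac)
      qed (simp add: a_def)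
    qed
    then have "(\<lambda>n. a n z) sums cosh (t * sqrt z)" using cosh_converges[of "t * sqrt z"] by simp
    then show ?thesis by (intro suminf_ennreal_eq[symmetric] a_nn z)
  qed
  have "(\<integral>\<^sup>+\<omega>. ennreal (cosh (t * sqrt (Z \<omega>))) \<partial>N) = (\<integral>\<^sup>+\<omega>. (\<Sum>n. ennreal (a n (Z \<omega>))) \<partial>N)"
    by (intro nn_integral_cong pt Znn)
  also have "\<dots> = (\<Sum>n. (\<integral>\<^sup>+\<omega>. ennreal (a n (Z \<omega>)) \<partial>N))"
    by (intro nn_integral_suminf) (simp add: a_def)
  also have "\<dots> = (\<Sum>n. ennreal (if even n then t^n / fact n * (\<integral>\<omega>. Z \<omega> ^ (n div 2) \<partial>N) else 0))"
  proof (intro suminf_cong)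
    fix n
    have "(\<integral>\<^sup>+\<omega>. ennreal (a n (Z \<omega>)) \<partial>N) = ennreal (\<integral>\<omega>. a n (Z \<omega>) \<partial>N)"
    proof (intro nn_integral_eq_integral AE_I2 a_nn Znn)
      show "integrable N (\<lambda>\<omega>. a n (Z \<omega>))"
        by (cases "even n") (auto simp: a_def intro!: Zi Bochner_Integration.integrable_mult_right)
    qed
    also have "(\<integral>\<omega>. a n (Z \<omega>) \<partial>N) = (if even n then t^n / fact n * (\<integral>\<omega>. Z \<omega> ^ (n div 2) \<partial>N) else 0)"
      by (simp add: a_def)
    finally show "(\<integral>\<^sup>+\<omega>. ennreal (a n (Z \<omega>)) \<partial>N) = ennreal (if even n then t^n / fact n * (\<integral>\<omega>. Z \<omega> ^ (n div 2) \<partial>N) else 0)" .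
  qed
  finally show ?thesis .
qed

lemma expmom_transfer:
  assumes XX: "expmom M X t" and N: "prob_space N"
    and Ym[measurable]: "Y \<in> borel_measurable N" and Ynn: "\<And>\<omega>. \<omega> \<in> space N \<Longrightarrow> Y \<omega> \<ge> 0"
    and Yi: "\<And>k. integrable N (\<lambda>\<omega>. Y \<omega> ^ k)"
    and mom: "\<And>k. (\<integral>\<omega>. Y \<omega> ^ k \<partial>N) = (\<integral>\<omega>. X \<omega> ^ k \<partial>M)"
  shows "expmom N Y t"
proof -
  interpret X: expmom M X t by (rule XX)
  have "(\<integral>\<^sup>+\<omega>. ennreal (norm (exp (t * sqrt (Y \<omega>)))) \<partial>N) \<le> (\<integral>\<^sup>+\<omega>. 2 * ennreal (cosh (t * sqrt (Y \<omega>))) \<partial>N)"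
  proof (intro nn_integral_mono)
    fix \<omega>
    have "exp (t * sqrt (Y \<omega>)) \<le> 2 * cosh (t * sqrt (Y \<omega>))"
      unfolding cosh_def by simp
    from ennreal_leI[OF this] show "ennreal (norm (exp (t * sqrt (Y \<omega>)))) \<le> 2 * ennreal (cosh (t * sqrt (Y \<omega>)))"
      by (simp add: ennreal_mult)
  qed
  also have "\<dots> = 2 * (\<integral>\<^sup>+\<omega>. ennreal (cosh (t * sqrt (Y \<omega>))) \<partial>N)"
    by (rule nn_integral_cmult) (unfold cosh_def, measurable)
  also have "(\<integral>\<^sup>+\<omega>. ennreal (cosh (t * sqrt (Y \<omega>))) \<partial>N) = (\<integral>\<^sup>+\<omega>. ennreal (cosh (t * sqrt (X \<omega>))) \<partial>M)"
  proof -
    have t0: "t \<ge> 0" using X.tpos by simp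
    have e: "(\<lambda>n. ennreal (if even n then t^n / fact n * (\<integral>\<omega>. Y \<omega> ^ (n div 2) \<partial>N) else 0))
      = (\<lambda>n. ennreal (if even n then t^n / fact n * (\<integral>\<omega>. X \<omega> ^ (n div 2) \<partial>M) else 0))"
    proof
      fix n show "ennreal (if even n then t^n / fact n * (\<integral>\<omega>. Y \<omega> ^ (n div 2) \<partial>N) else 0)
        = ennreal (if even n then t^n / fact n * (\<integral>\<omega>. X \<omega> ^ (n div 2) \<partial>M) else 0)"
        by (simp only: mom[of "n div 2"])
    qed
    show ?thesis
      using cosh_moments[OF Ym Ynn Yi t0] cosh_moments[OF X.Xm X.Xnn X.int_X_pow t0] e by simp
  qed
  also have "\<dots> \<le> (\<integral>\<^sup>+\<omega>. ennreal (exp (t * sqrt (X \<omega>))) \<partial>M)"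
  proof (intro nn_integral_mono ennreal_leI)
    fix \<omega> assume "\<omega> \<in> space M"
    then have "t * sqrt (X \<omega>) \<ge> 0" using X.Xnn X.tpos by simp
    then show "cosh (t * sqrt (X \<omega>)) \<le> exp (t * sqrt (X \<omega>))"
      unfolding cosh_def by simp
  qed
  also have "\<dots> = ennreal X.EE"
    unfolding X.EE_def by (intro nn_integral_eq_integral X.Eint) auto
  finally have le: "(\<integral>\<^sup>+\<omega>. ennreal (norm (exp (t * sqrt (Y \<omega>)))) \<partial>N) \<le> 2 * ennreal X.EE"
    by (metis mult_left_mono zero_le)
  have "2 * ennreal X.EE < \<infinity>" by (simp add: ennreal_mult_less_top)
  with le have "(\<integral>\<^sup>+\<omega>. ennreal (norm (exp (t * sqrt (Y \<omega>)))) \<partial>N) < \<infinity>"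
    by (rule order.strict_trans1)
  then have "integrable N (\<lambda>\<omega>. exp (t * sqrt (Y \<omega>)))"
    by (intro integrableI_bounded) auto
  then show ?thesis
    using N X.tpos Ynn by (intro expmom.intro expmom_axioms.intro) auto
qed


lemma exp_sqrt_summable:
  assumes t: "(t::real) > 0"
  shows "summable (\<lambda>n. exp (- t * sqrt (real n)))"
proof (rule summable_comparison_test'[of "\<lambda>n. (24 / t^4) * inverse (real n ^ 2)" 1])
  show "summable (\<lambda>n. (24 / t^4) * inverse (real n ^ 2))"
    by (intro summable_mult inverse_power_summable) auto
  fix n :: nat assume n: "n \<ge> 1"
  have "(t * sqrt (real n))^4 / fact 4 \<le> exp (t * sqrt (real n))" using t by (intro pow_le_exp) auto
  moreover have "(t * sqrt (real n))^4 = t^4 * real n ^ 2"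
  proof -
    have "sqrt (real n)^4 = (sqrt (real n)^2)^2" by (simp add: eval_nat_numeral mult_ac)
    then show ?thesis by (simp add: power_mult_distrib)
  qed
  moreover have "(fact 4 :: real) = 24" by (simp add: fact_numeral)
  ultimately have "t^4 * real n ^ 2 / 24 \<le> exp (t * sqrt (real n))" by simp
  moreover have "t^4 * real n ^ 2 > 0" using t n by simp
  ultimately have "exp (- t * sqrt (real n)) \<le> 24 / (t^4 * real n ^ 2)"
    by (simp add: exp_minus field_simps)
  then show "norm (exp (- t * sqrt (real n))) \<le> (24 / t^4) * inverse (real n ^ 2)"
    by (simp add: field_simps)
qed

lemma tail_to_expmom:
  assumes M: "prob_space M" and Xm[measurable]: "X \<in> borel_measurable M"
    and Xnn: "\<And>\<omega>. \<omega> \<in> space M \<Longrightarrow> X \<omega> \<ge> 0" and c: "c > 0"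
    and ev: "eventually (\<lambda>x. measure M {\<omega>\<in>space M. X \<omega> > x} \<le> exp (- c * sqrt x)) at_top"
  shows "expmom M X (c/2)"
proof -
  interpret prob_space M by (rule M)
  define t where "t = c/2"
  have t: "t > 0" using c by (simp add: t_def)
  obtain x0 where x0: "\<And>x. x \<ge> x0 \<Longrightarrow> measure M {\<omega>\<in>space M. X \<omega> > x} \<le> exp (- c * sqrt x)"
    using ev unfolding eventually_at_top_linorder by blast
  define p where "p n = measure M {\<omega>\<in>space M. X \<omega> > real n}" for n
  define a where "a n = exp (t * sqrt (real n + 1)) * p n" for n
  have a_nn: "a n \<ge> 0" for n unfolding a_def p_def by simp
  have sa: "summable a"
  proof (rule summable_comparison_test'[of "\<lambda>n. exp t * exp (- t * sqrt (real n))" "nat \<lceil>x0\<rceil>"])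
    show "summable (\<lambda>n. exp t * exp (- t * sqrt (real n)))"
      by (intro summable_mult exp_sqrt_summable t)
    fix n assume n: "n \<ge> nat \<lceil>x0\<rceil>"
    then have "real n \<ge> x0" by linarith
    then have pn: "p n \<le> exp (- c * sqrt (real n))" unfolding p_def by (rule x0)
    have sq: "sqrt (real n + 1) \<le> sqrt (real n) + 1"
    proof -
      have "real n + 1 \<le> (sqrt (real n) + 1)^2"
        by (simp add: power2_eq_square algebra_simps)
      from real_sqrt_le_mono[OF this] show ?thesis by simp
    qed
    have "a n \<le> exp (t * sqrt (real n + 1)) * exp (- c * sqrt (real n))"
      unfolding a_def by (intro mult_left_mono pn) auto
    also have "\<dots> = exp (t * sqrt (real n + 1) - c * sqrt (real n))" by (simp add: exp_add[symmetric])
    also have "\<dots> \<le> exp (t + - t * sqrt (real n))"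
      using sq t unfolding t_def by (subst exp_le_cancel_iff) (auto simp: algebra_simps dest: mult_left_mono[of _ _ c])
    also have "\<dots> = exp t * exp (- t * sqrt (real n))" by (simp add: exp_add[symmetric])
    finally show "norm (a n) \<le> exp t * exp (- t * sqrt (real n))" using a_nn by simp
  qed
  have pt: "ennreal (exp (t * sqrt (X \<omega>))) \<le> 1 + (\<Sum>n. ennreal (exp (t * sqrt (real n + 1))) * indicator {\<omega>\<in>space M. X \<omega> > real n} \<omega>)"
    if w: "\<omega> \<in> space M" for \<omega>
  proof (cases "X \<omega> > 0")
    case False
    then have "X \<omega> = 0" using Xnn[OF w] by simp
    then show ?thesis by simp
  next
    case True
    define m where "m = nat (\<lceil>X \<omega>\<rceil> - 1)"
    have m1: "real m < X \<omega>" and m2: "X \<omega> \<le> real m + 1"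
      using True unfolding m_def by (linarith, linarith)
    have "ennreal (exp (t * sqrt (X \<omega>))) \<le> ennreal (exp (t * sqrt (real m + 1)))"
      using m2 t Xnn[OF w] by (intro ennreal_leI) (auto)
    also have "\<dots> = ennreal (exp (t * sqrt (real m + 1))) * indicator {\<omega>\<in>space M. X \<omega> > real m} \<omega>"
      using m1 w by simp
    also have "\<dots> \<le> (\<Sum>n. ennreal (exp (t * sqrt (real n + 1))) * indicator {\<omega>\<in>space M. X \<omega> > real n} \<omega>)"
    proof -
      let ?f = "\<lambda>n. ennreal (exp (t * sqrt (real n + 1))) * indicator {\<omega>\<in>space M. X \<omega> > real n} \<omega>"
      have "sum ?f {m} \<le> suminf ?f" by (rule sum_le_suminf[OF summableI]) auto
      then show ?thesis by (simp only: sum.insert[OF finite.emptyI empty_iff[THEN iffD1, THEN notI]] sum.empty add_0_right)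
    qed
    also have "\<dots> \<le> 1 + \<dots>" by simp
    finally show ?thesis .
  qed
  have "(\<integral>\<^sup>+\<omega>. ennreal (norm (exp (t * sqrt (X \<omega>)))) \<partial>M)
      \<le> (\<integral>\<^sup>+\<omega>. 1 + (\<Sum>n. ennreal (exp (t * sqrt (real n + 1))) * indicator {\<omega>\<in>space M. X \<omega> > real n} \<omega>) \<partial>M)"
    by (intro nn_integral_mono) (simp add: pt)
  also have "\<dots> = 1 + (\<Sum>n. (\<integral>\<^sup>+\<omega>. ennreal (exp (t * sqrt (real n + 1))) * indicator {\<omega>\<in>space M. X \<omega> > real n} \<omega> \<partial>M))"
    by (subst nn_integral_add) (auto simp: nn_integral_suminf emeasure_space_1)
  also have "(\<Sum>n. (\<integral>\<^sup>+\<omega>. ennreal (exp (t * sqrt (real n + 1))) * indicator {\<omega>\<in>space M. X \<omega> > real n} \<omega> \<partial>M))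
      = (\<Sum>n. ennreal (a n))"
    by (intro suminf_cong) (simp add: nn_integral_cmult_indicator emeasure_eq_measure a_def p_def ennreal_mult)
  also have "1 + (\<Sum>n. ennreal (a n)) < \<infinity>"
    using ennreal_suminf_neq_top[OF sa a_nn] by (simp add: top.not_eq_extremum)
  finally have "integrable M (\<lambda>\<omega>. exp (t * sqrt (X \<omega>)))"
    by (intro integrableI_bounded) auto
  then show ?thesis
    unfolding t_def using M Xnn c by (intro expmom.intro expmom_axioms.intro) auto
qed


lemma liminf_to_tail:
  assumes L: "Liminf at_top (\<lambda>x. tail_R M X x / ereal (sqrt x)) > 0"
  shows "\<exists>c>0. eventually (\<lambda>x. measure M {\<omega>\<in>space M. X \<omega> > x} \<le> exp (- c * sqrt x)) at_top"
proof -
  obtain c where c0: "0 < ereal c" and cL: "ereal c < Liminf at_top (\<lambda>x. tail_R M X x / ereal (sqrt x))"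
    using ereal_dense2[OF L] by blast
  have c: "c > 0" using c0 by simp
  have ev: "eventually (\<lambda>x. tail_R M X x / ereal (sqrt x) > ereal c) at_top"
    by (rule less_LiminfD[OF cL])
  have "eventually (\<lambda>x. measure M {\<omega>\<in>space M. X \<omega> > x} \<le> exp (- c * sqrt x)) at_top"
    using ev eventually_gt_at_top[of 0]
  proof eventually_elim
    case (elim x)
    define p where "p = measure M {\<omega>\<in>space M. X \<omega> > x}"
    have sx: "sqrt x > 0" using elim by simp
    show ?case
    proof (cases "p = 0")
      case True then show ?thesis unfolding p_def by simp
    next
      case False
      have "p \<ge> 0" unfolding p_def by (rule measure_nonneg)
      with False have p: "p > 0" by simp
      have "tail_R M X x = ereal (- ln p)" unfolding tail_R_def p_def[symmetric] using False by simp
      with elim sx have "- ln p / sqrt x > c" by simp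
      then have "- ln p > c * sqrt x" using sx by (simp add: field_simps)
      then have "ln p < - c * sqrt x" by simp
      then have "exp (ln p) < exp (- c * sqrt x)" by simp
      then show ?thesis using p unfolding p_def[symmetric] by simp
    qed
  qed
  then show ?thesis using c by blast
qed

lemma scale_to_liminf:
  assumes ns: "natural_scale M X h" and hL: "Liminf at_top (\<lambda>x. ereal (h x / sqrt x)) > 0"
  shows "Liminf at_top (\<lambda>x. tail_R M X x / ereal (sqrt x)) > 0"
proof -
  obtain d where d0: "0 < ereal d" and dL: "ereal d < Liminf at_top (\<lambda>x. ereal (h x / sqrt x))"
    using ereal_dense2[OF hL] by blast
  have d: "d > 0" using d0 by simp
  have e1: "eventually (\<lambda>x. ereal (h x / sqrt x) > ereal d) at_top" by (rule less_LiminfD[OF dL])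
  have "ereal (1/2) < Liminf at_top (\<lambda>x. tail_R M X x / ereal (h x))"
    using ns unfolding natural_scale_def by simp
  then have e2: "eventually (\<lambda>x. tail_R M X x / ereal (h x) > ereal (1/2)) at_top" by (rule less_LiminfD)
  have "filterlim h at_top at_top" using ns unfolding natural_scale_def by simp
  then have e3: "eventually (\<lambda>x. h x > 0) at_top" by (rule filterlim_at_top_dense[THEN iffD1, rule_format]) 
  have "eventually (\<lambda>x. ereal (d/2) \<le> tail_R M X x / ereal (sqrt x)) at_top"
    using e1 e2 e3 eventually_gt_at_top[of 0]
  proof eventually_elim
    case (elim x)
    have sx: "sqrt x > 0" using elim by simp
    have hd: "h x > d * sqrt x" using elim sx by (simp add: field_simps)
    show ?case
    proof (cases "tail_R M X x = \<infinity>")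
      case True then show ?thesis using sx by simp
    next
      case False
      then obtain r where r: "tail_R M X x = ereal r" unfolding tail_R_def Let_def by (auto split: if_splits)
      have "r / h x > 1/2" using elim r by simp
      then have "r > h x / 2" using elim by (simp add: field_simps)
      then have "r > d * sqrt x / 2" using hd by simp
      then have "r / sqrt x > d / 2" using sx by (simp add: field_simps)
      then show ?thesis using r sx by simp
    qed
  qed
  then have "ereal (d/2) \<le> Liminf at_top (\<lambda>x. tail_R M X x / ereal (sqrt x))" by (rule Liminf_bounded)
  moreover have "0 < ereal (d/2)" using d by simp
  ultimately show ?thesis by (rule order.strict_trans2[rotated])
qed


theorem lemma2p10:
  fixes M :: "'a measure" and X :: "'a \<Rightarrow> real"
  assumes "prob_space M"
    and "X \<in> borel_measurable M"
    and "\<forall>\<omega>\<in>space M. X \<omega> \<ge> 0"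
  shows "(Liminf at_top (\<lambda>x. tail_R M X x / ereal (sqrt x)) > 0
            \<longrightarrow> moment_determinate M X)
       \<and> ((heavy_tailed M X \<and>
            (\<exists>h. natural_scale M X h \<and> Liminf at_top (\<lambda>x. ereal (h x / sqrt x)) > 0))
            \<longrightarrow> Liminf at_top (\<lambda>x. tail_R M X x / ereal (sqrt x)) > 0
                \<and> moment_determinate M X)"
proof -
  note Mp = assms(1) and Xm[measurable] = assms(2) and Xnn = assms(3)
  have part1: "moment_determinate M X" if L: "Liminf at_top (\<lambda>x. tail_R M X x / ereal (sqrt x)) > 0"
  proof -
    obtain c where c: "c > 0"
      and ev: "eventually (\<lambda>x. measure M {\<omega>\<in>space M. X \<omega> > x} \<le> exp (- c * sqrt x)) at_top"
      using liminf_to_tail[OF L] by blast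
    have XX: "expmom M X (c/2)" by (rule tail_to_expmom[OF Mp Xm _ c ev]) (use Xnn in auto)
    interpret XM: expmom M X "c/2" by (rule XX)
    show ?thesis unfolding moment_determinate_def
    proof (intro conjI allI impI)
      show "integrable M (\<lambda>\<omega>. X \<omega> ^ k)" for k by (rule XM.int_X_pow)
      fix N :: "real measure" and Y :: "real \<Rightarrow> real"
      assume N: "prob_space N" and Ym[measurable]: "Y \<in> borel_measurable N"
        and Ynn: "AE \<omega> in N. Y \<omega> \<ge> 0"
        and mom: "\<forall>k. integrable N (\<lambda>\<omega>. Y \<omega> ^ k) \<and> (\<integral>\<omega>. Y \<omega> ^ k \<partial>N) = (\<integral>\<omega>. X \<omega> ^ k \<partial>M)"
      define Y' where "Y' \<omega> = max 0 (Y \<omega>)" for \<omega>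
      have Y'm[measurable]: "Y' \<in> borel_measurable N" unfolding Y'_def by measurable
      have ae: "AE \<omega> in N. Y \<omega> = Y' \<omega>" using Ynn by eventually_elim (simp add: Y'_def)
      have aek: "AE \<omega> in N. Y \<omega> ^ k = Y' \<omega> ^ k" for k using ae by eventually_elim simp
      have Y'i: "integrable N (\<lambda>\<omega>. Y' \<omega> ^ k)" for k
        using mom integrable_cong_AE[OF _ _ aek[of k]] by auto
      have Y'mom: "(\<integral>\<omega>. Y' \<omega> ^ k \<partial>N) = (\<integral>\<omega>. X \<omega> ^ k \<partial>M)" for k
        using mom integral_cong_AE[OF _ _ aek[of k]] by auto
      have YY: "expmom N Y' (c/2)"
        by (rule expmom_transfer[OF XX N Y'm _ Y'i Y'mom]) (simp add: Y'_def)
      have "distr N borel Y' = distr M borel X" by (rule det_core[OF XX YY Y'mom])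
      moreover have "distr N borel Y = distr N borel Y'"
        by (rule distr_cong_AE[OF refl refl ae]) auto
      ultimately show "distr N borel Y = distr M borel X" by simp
    qed
  qed
  show ?thesis
    using part1 scale_to_liminf by blast
qed

end
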